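(* Let $D\subseteq\mathbb C^{n-1}\times\mathbb R$ be a domain and $u:D\times(0,+\infty)\to\mathbb R$, $u=u(x,y',t)$, continuous. Then the function $v(z,t)=y_n-u(x,y',t)$ is a weak solution of $v_t=\mathcal H(v)$ in $(D\times i\mathbb R)\times(0,+\infty)$ if and only if $u$ is a weak solution of $u_t=\mathcal H_0(u)$ in $D\times(0,+\infty)$.
   Context: Coordinates $z_\alpha=x_\alpha+iy_\alpha$ on $\mathbb C^n$, $n\ge2$; $x=(x_1,\dots,x_n)$, $y'=(y_1,\dots,y_{n-1})$, and $\mathbb C^{n-1}\times\mathbb R$ has coordinates $(x,y')$, so $D\times i\mathbb R=\{z:(x,y')\in D\}$. For $v(z,t)$ write $v_\alpha=\partial v/\partial z_\alpha$, $v_{\bar\beta}=\partial v/\partial\bar z_\beta$, $v_{\alpha\bar\beta}=\partial^2v/\partial z_\alpha\partial\bar z_\beta$, $|\partial v|^2=\sum_\alpha|v_\alpha|^2$, and for $C^2$ $v$ with $\partial v\ne0$, $\mathcal H(v)=\sum_{\alpha,\beta}(\delta_{\alpha\beta}-|\partial v|^{-2}v_\alpha v_{\bar\beta})v_{\alpha\bar\beta}$. Weak (viscosity) solutions of $v_t=\mathcal H(v)$: continuous $v$ such that for every $\phi$ smooth near $(z^0,t^0)$ with $v-\phi$ having a local max (resp. min) at $(z^0,t^0)$, $\phi_t\le\mathcal H(\phi)$ (resp. $\ge$) there if $\partial\phi\ne0$, and $\phi_t\le$ (resp. $\ge$) $\sum_{\alpha,\beta}(\delta_{\alpha\beta}-\eta_\alpha\bar\eta_\beta)\phi_{\alpha\bar\beta}$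 for some $|\eta|\le1$ if $\partial\phi=0$. For a $C^2$ function $w=w(x,y')$ (independent of $y_n$) define $\mathcal H_0(w)(x,y')=\mathcal H(w-y_n)$; this is well defined since $\partial(w-y_n)/\partial z_n=\tfrac12(w_{x_n}+i)\neq0$, and it is a degenerate elliptic quasilinear second-order operator in $(x,y')$ (the Levi operator for graphs $y_n=w$). A continuous $u(x,y',t)$ is a weak solution of $u_t=\mathcal H_0(u)$ if for every smooth $\phi(x,y',t)$ such that $u-\phi$ has a local maximum (resp. minimum) at a point, $\phi_t\le\mathcal H_0(\phi)$ (resp. $\phi_t\ge\mathcal H_0(\phi)$) at that point. *)

theory Defs
  imports "HOL-Analysis.Analysis"
begin

fun Ck_on :: "nat \<Rightarrow> 'a::real_normed_vector set \<Rightarrow> ('a \<Rightarrow> real) \<Rightarrow> bool" where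
  "Ck_on 0 S f = continuous_on S f"
| "Ck_on (Suc k) S f =
     ((\<forall>x\<in>S. f differentiable (at x)) \<and>
      (\<forall>v. Ck_on k S (\<lambda>x. frechet_derivative f (at x) v)))"

definition smooth_on :: "'a::real_normed_vector set \<Rightarrow> ('a \<Rightarrow> real) \<Rightarrow> bool" where
  "smooth_on S f \<longleftrightarrow> (\<forall>k. Ck_on k S f)"

definition dirD :: "('a::real_normed_vector \<Rightarrow> real) \<Rightarrow> 'a \<Rightarrow> 'a \<Rightarrow> real" where
  "dirD f p v = frechet_derivative f (at p) v"

definition dirD2 :: "('a::real_normed_vector \<Rightarrow> real) \<Rightarrow> 'a \<Rightarrow> 'a \<Rightarrow> 'a \<Rightarrow> real" where
  "dirD2 f p v w = frechet_derivative (\<lambda>q. frechet_derivative f (at q) v) (at p) w"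

definition ex :: "'i::finite \<Rightarrow> (complex^'i) \<times> real" where
  "ex a = (axis a 1, 0)"

definition ey :: "'i::finite \<Rightarrow> (complex^'i) \<times> real" where
  "ey a = (axis a \<i>, 0)"

definition et :: "(complex^'i::finite) \<times> real" where
  "et = (0, 1)"

definition dt :: "((complex^'i::finite) \<times> real \<Rightarrow> real) \<Rightarrow> (complex^'i) \<times> real \<Rightarrow> real" where
  "dt f p = dirD f p et"

definition dz :: "((complex^'i::finite) \<times> real \<Rightarrow> real) \<Rightarrow> (complex^'i) \<times> real \<Rightarrow> 'i \<Rightarrow> complex" where
  "dz f p a = (complex_of_real (dirD f p (ex a)) - \<i> * complex_of_real (dirD f p (ey a))) / 2"

definition dzb :: "((complex^'i::finite) \<times> real \<Rightarrow> real) \<Rightarrow> (complex^'i) \<times> real \<Rightarrow> 'i \<Rightarrow> complex" where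
  "dzb f p a = (complex_of_real (dirD f p (ex a)) + \<i> * complex_of_real (dirD f p (ey a))) / 2"

text \<open>mixed derivative d^2 f / (dz_a d conj(z_b)) = (1/4)(d_{x_a} - i d_{y_a})(d_{x_b} + i d_{y_b}) f\<close>
definition dzdzb :: "((complex^'i::finite) \<times> real \<Rightarrow> real) \<Rightarrow> (complex^'i) \<times> real \<Rightarrow> 'i \<Rightarrow> 'i \<Rightarrow> complex" where
  "dzdzb f p a b =
     (complex_of_real (dirD2 f p (ex b) (ex a))
      + \<i> * complex_of_real (dirD2 f p (ey b) (ex a))
      - \<i> * complex_of_real (dirD2 f p (ex b) (ey a))
      + complex_of_real (dirD2 f p (ey b) (ey a))) / 4"

definition gradsq :: "((complex^'i::finite) \<times> real \<Rightarrow> real) \<Rightarrow> (complex^'i) \<times> real \<Rightarrow> real" where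
  "gradsq f p = (\<Sum>a\<in>UNIV. (cmod (dz f p a))^2)"

text \<open>Levi operator H(f) (real-valued; the real part is taken, the sum is real anyway)\<close>
definition levi :: "((complex^'i::finite) \<times> real \<Rightarrow> real) \<Rightarrow> (complex^'i) \<times> real \<Rightarrow> real" where
  "levi f p = Re (\<Sum>a\<in>UNIV. \<Sum>b\<in>UNIV.
      ((if a = b then 1 else 0) - dz f p a * dzb f p b / complex_of_real (gradsq f p)) * dzdzb f p a b)"

text \<open>degenerate operator with parameter eta, used where del f = 0\<close>
definition levi_deg :: "((complex^'i::finite) \<times> real \<Rightarrow> real) \<Rightarrow> (complex^'i) \<times> real \<Rightarrow> complex^'i \<Rightarrow> real" where
  "levi_deg f p \<eta> = Re (\<Sum>a\<in>UNIV. \<Sum>b\<in>UNIV.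
      ((if a = b then 1 else 0) - (\<eta> $ a) * cnj (\<eta> $ b)) * dzdzb f p a b)"

definition loc_max :: "'a::metric_space set \<Rightarrow> ('a \<Rightarrow> real) \<Rightarrow> 'a \<Rightarrow> bool" where
  "loc_max S g p \<longleftrightarrow> (\<exists>e>0. \<forall>q\<in>S. dist q p < e \<longrightarrow> g q \<le> g p)"

definition loc_min :: "'a::metric_space set \<Rightarrow> ('a \<Rightarrow> real) \<Rightarrow> 'a \<Rightarrow> bool" where
  "loc_min S g p \<longleftrightarrow> (\<exists>e>0. \<forall>q\<in>S. dist q p < e \<longrightarrow> g p \<le> g q)"

definition weak_sol_H :: "((complex^'i::finite) \<times> real) set \<Rightarrow> ((complex^'i) \<times> real \<Rightarrow> real) \<Rightarrow> bool" where
  "weak_sol_H \<Omega> v \<longleftrightarrow> continuous_on \<Omega> v \<and>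
     (\<forall>p\<in>\<Omega>. \<forall>\<phi> U. open U \<and> p \<in> U \<and> smooth_on U \<phi> \<longrightarrow>
        (loc_max \<Omega> (\<lambda>q. v q - \<phi> q) p \<longrightarrow>
           (if (\<forall>a. dz \<phi> p a = 0)
            then (\<exists>\<eta>::complex^'i. norm \<eta> \<le> 1 \<and> dt \<phi> p \<le> levi_deg \<phi> p \<eta>)
            else dt \<phi> p \<le> levi \<phi> p)) \<and>
        (loc_min \<Omega> (\<lambda>q. v q - \<phi> q) p \<longrightarrow>
           (if (\<forall>a. dz \<phi> p a = 0)
            then (\<exists>\<eta>::complex^'i. norm \<eta> \<le> 1 \<and> dt \<phi> p \<ge> levi_deg \<phi> p \<eta>)
            else dt \<phi> p \<ge> levi \<phi> p)))"

section \<open>The reduced space C^{n-1} x R with coordinates (x, y'),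
  C^n = complex^('m option): index None is the n-th coordinate, x :: real^('m option), y' :: real^'m\<close>

definition proj :: "complex^('m::finite option) \<Rightarrow> (real^('m option)) \<times> (real^'m)" where
  "proj z = ((\<chi> i. Re (z $ i)), (\<chi> j. Im (z $ Some j)))"

definition embed :: "(real^('m::finite option)) \<times> (real^'m) \<Rightarrow> complex^('m option)" where
  "embed q = (\<chi> i. Complex (fst q $ i) (case i of None \<Rightarrow> 0 | Some j \<Rightarrow> snd q $ j))"

definition lift :: "(((real^('m::finite option)) \<times> (real^'m)) \<times> real \<Rightarrow> real)
                   \<Rightarrow> (complex^('m option)) \<times> real \<Rightarrow> real" where
  "lift \<phi> p = \<phi> (proj (fst p), snd p) - Im (fst p $ None)"

text \<open>H_0(phi)(x,y',t) = H(phi - y_n) evaluated at a point over (x,y') (here y_n = 0)\<close>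
definition levi0 :: "(((real^('m::finite option)) \<times> (real^'m)) \<times> real \<Rightarrow> real)
                   \<Rightarrow> ((real^('m option)) \<times> (real^'m)) \<times> real \<Rightarrow> real" where
  "levi0 \<phi> q = levi (lift \<phi>) (embed (fst q), snd q)"

definition dt0 :: "(((real^('m::finite option)) \<times> (real^'m)) \<times> real \<Rightarrow> real)
                   \<Rightarrow> ((real^('m option)) \<times> (real^'m)) \<times> real \<Rightarrow> real" where
  "dt0 \<phi> q = dirD \<phi> q (0, 1)"

definition weak_sol_H0 :: "(((real^('m::finite option)) \<times> (real^'m)) \<times> real) set
                   \<Rightarrow> (((real^('m option)) \<times> (real^'m)) \<times> real \<Rightarrow> real) \<Rightarrow> bool" where
  "weak_sol_H0 \<Omega> u \<longleftrightarrow> continuous_on \<Omega> u \<and>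
     (\<forall>q\<in>\<Omega>. \<forall>\<phi> U. open U \<and> q \<in> U \<and> smooth_on U \<phi> \<longrightarrow>
        (loc_max \<Omega> (\<lambda>r. u r - \<phi> r) q \<longrightarrow> dt0 \<phi> q \<le> levi0 \<phi> q) \<and>
        (loc_min \<Omega> (\<lambda>r. u r - \<phi> r) q \<longrightarrow> dt0 \<phi> q \<ge> levi0 \<phi> q))"

end

theory Submission
  imports Defs
begin


definition C2at :: "('a::real_normed_vector \<Rightarrow> real) \<Rightarrow> 'a \<Rightarrow> bool" where
  "C2at f p \<longleftrightarrow> (\<exists>U. open U \<and> p \<in> U \<and> (\<forall>x\<in>U. f differentiable (at x))) \<and>
     (\<forall>v. (\<lambda>x. frechet_derivative f (at x) v) differentiable (at p))"

lemma smooth_C2at: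
  assumes "smooth_on U f" "open U" "p \<in> U" shows "C2at f p"
proof -
  have "Ck_on (Suc (Suc 0)) U f" using assms(1) unfolding smooth_on_def by blast
  then have h1: "\<forall>x\<in>U. f differentiable (at x)" and
    h2: "\<forall>v. \<forall>x\<in>U. (\<lambda>x. frechet_derivative f (at x) v) differentiable (at x)" by simp_all
  show ?thesis unfolding C2at_def using h1 h2 assms(2,3) by blast
qed

lemma Ck_on_cong:
  assumes "open S" shows "(\<forall>x\<in>S. f x = g x) \<Longrightarrow> Ck_on k S f \<Longrightarrow> Ck_on k S g"
proof (induction k arbitrary: f g)
  case 0
  then show ?case by (metis Ck_on.simps(1) continuous_on_cong)
next
  case (Suc k)
  have hd: "(g has_derivative frechet_derivative f (at x)) (at x)" if "x \<in> S" for x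
  proof -
    have "f differentiable (at x)" using Suc.prems(2) that by simp
    then have "(f has_derivative frechet_derivative f (at x)) (at x within UNIV)"
      using frechet_derivative_works by auto
    from has_derivative_transform_within_open[OF this assms that] Suc.prems(1)
    show ?thesis by auto
  qed
  have fd: "frechet_derivative g (at x) = frechet_derivative f (at x)" if "x \<in> S" for x
    using frechet_derivative_at[OF hd[OF that]] by simp
  have d: "\<forall>x\<in>S. g differentiable (at x)" using hd by (auto intro: differentiableI)
  have c: "Ck_on k S (\<lambda>x. frechet_derivative g (at x) v)" for v
  proof (rule Suc.IH[of "\<lambda>x. frechet_derivative f (at x) v"])
    show "\<forall>x\<in>S. frechet_derivative f (at x) v = frechet_derivative g (at x) v" using fd by simp
    show "Ck_on k S (\<lambda>x. frechet_derivative f (at x) v)" using Suc.prems(2) by simp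
  qed
  show ?case using d c by simp
qed

lemma g_deriv:
  fixes f :: "'b::real_normed_vector \<Rightarrow> real" and Al :: "'a::real_normed_vector \<Rightarrow> 'b"
  assumes "f differentiable (at (Al x + c))" "bounded_linear Al" "bounded_linear l" "bounded_linear m"
  shows "((\<lambda>x. a * f (Al x + c) + l x + d + k * (m x + d')\<^sup>2) has_derivative
     (\<lambda>v. a * frechet_derivative f (at (Al x + c)) (Al v) + l v + 2 * k * (m x + d') * m v)) (at x)"
proof -
  have f: "(f has_derivative frechet_derivative f (at (Al x + c))) (at (Al x + c))"
    using assms(1) frechet_derivative_works by blast
  have A: "((\<lambda>x. Al x + c) has_derivative Al) (at x)"
    using has_derivative_add_const[OF bounded_linear_imp_has_derivative[OF assms(2)]] by blast
  have fc: "((\<lambda>x. f (Al x + c)) has_derivative (\<lambda>v. frechet_derivative f (at (Al x + c)) (Al v))) (at x)"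
    using diff_chain_at[OF A f] by (simp add: o_def)
  have mm: "((\<lambda>x. m x + d') has_derivative m) (at x)"
    using has_derivative_add_const[OF bounded_linear_imp_has_derivative[OF assms(4)]] by blast
  have sq0: "((\<lambda>x. k * ((m x + d') * (m x + d'))) has_derivative
      (\<lambda>v. k * ((m x + d') * m v + m v * (m x + d')))) (at x)"
    by (rule has_derivative_mult_right[OF has_derivative_mult[OF mm mm]])
  have sq: "((\<lambda>x. k * (m x + d')\<^sup>2) has_derivative (\<lambda>v. 2 * k * (m x + d') * m v)) (at x)"
    using sq0 unfolding power2_eq_square by (rule has_derivative_eq_rhs) (auto simp: algebra_simps)
  have af: "((\<lambda>x. a * f (Al x + c)) has_derivative (\<lambda>v. a * frechet_derivative f (at (Al x + c)) (Al v))) (at x)"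
    by (rule has_derivative_mult_right[OF fc])
  have L: "(l has_derivative l) (at x)" by (rule bounded_linear_imp_has_derivative[OF assms(3)])
  have s1: "((\<lambda>x. a * f (Al x + c) + l x) has_derivative (\<lambda>v. a * frechet_derivative f (at (Al x + c)) (Al v) + l v)) (at x)"
    by (rule has_derivative_add[OF af L])
  have s2: "((\<lambda>x. a * f (Al x + c) + l x + d) has_derivative (\<lambda>v. a * frechet_derivative f (at (Al x + c)) (Al v) + l v)) (at x)"
    by (rule has_derivative_add_const[OF s1])
  show ?thesis
    using has_derivative_add[OF s2 sq] by simp
qed



lemma aff_open:
  assumes "open U" "bounded_linear Al" shows "open {x. Al x + c \<in> U}"
proof -
  have "{x. Al x + c \<in> U} = (\<lambda>x. Al x + c) -` U" by auto
  moreover have "isCont (\<lambda>x. Al x + c) x" for x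
    using linear_continuous_at[OF assms(2)] by (intro continuous_intros) auto
  ultimately show ?thesis using continuous_open_vimage[OF assms(1)] by metis
qed

lemma Ck_comp:
  fixes f :: "'b::real_normed_vector \<Rightarrow> real" and Al :: "'a::real_normed_vector \<Rightarrow> 'b"
  assumes U: "open U" and Al: "bounded_linear Al" and m: "bounded_linear m"
  shows "Ck_on k U f \<Longrightarrow> bounded_linear l \<Longrightarrow>
    (\<forall>x. g x = a * f (Al x + c) + l x + d + \<kappa> * (m x + d')\<^sup>2) \<Longrightarrow> Ck_on k {x. Al x + c \<in> U} g"
proof (induction k arbitrary: f l d \<kappa> g a)
  case 0
  have gg: "g = (\<lambda>x. a * f (Al x + c) + l x + d + \<kappa> * (m x + d')\<^sup>2)" using "0.prems"(3) by auto
  have c1: "continuous_on {x. Al x + c \<in> U} (\<lambda>x. Al x + c)"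
    using linear_continuous_at[OF Al] by (intro continuous_intros continuous_at_imp_continuous_on) auto
  have c2: "continuous_on {x. Al x + c \<in> U} (\<lambda>x. f (Al x + c))"
    using continuous_on_compose2[OF _ c1, of U f] "0.prems"(1) by auto
  have cl: "continuous_on S l" for S using linear_continuous_at[OF "0.prems"(2)]
    by (intro continuous_at_imp_continuous_on) auto
  have cm: "continuous_on S m" for S using linear_continuous_at[OF m]
    by (intro continuous_at_imp_continuous_on) auto
  show ?case unfolding gg Ck_on.simps
    by (intro continuous_intros c2 cl cm)
next
  case (Suc k)
  let ?V = "{x. Al x + c \<in> U}"
  have gg: "g = (\<lambda>x. a * f (Al x + c) + l x + d + \<kappa> * (m x + d')\<^sup>2)" using Suc.prems(3) by auto
  have fdiff: "\<forall>y\<in>U. f differentiable (at y)" using Suc.prems(1) by simp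
  have gd: "(g has_derivative (\<lambda>v. a * frechet_derivative f (at (Al x + c)) (Al v) + l v + 2 * \<kappa> * (m x + d') * m v)) (at x)"
    if "x \<in> ?V" for x
  proof -
    have "f differentiable (at (Al x + c))" using fdiff that by simp
    then show ?thesis unfolding gg by (rule g_deriv[OF _ Al Suc.prems(2) m])
  qed
  have fdg: "frechet_derivative g (at x) v = a * frechet_derivative f (at (Al x + c)) (Al v) + l v + 2 * \<kappa> * (m x + d') * m v"
    if "x \<in> ?V" for x v
    by (simp add: frechet_derivative_at[OF gd[OF that], symmetric])
  have ck: "Ck_on k ?V (\<lambda>x. frechet_derivative g (at x) v)" for v
  proof -
    have bl: "bounded_linear (\<lambda>x. 2 * \<kappa> * m v * m x)"
      using bounded_linear_compose[OF bounded_linear_mult_right m] by blast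
    have "Ck_on k ?V (\<lambda>x. a * frechet_derivative f (at (Al x + c)) (Al v) + 2 * \<kappa> * m v * m x + (l v + 2 * \<kappa> * d' * m v) + 0 * (m x + d')\<^sup>2)"
      by (rule Suc.IH[where f="\<lambda>y. frechet_derivative f (at y) (Al v)" and l="\<lambda>x. 2 * \<kappa> * m v * m x"
          and d="l v + 2 * \<kappa> * d' * m v" and \<kappa>=0 and a=a, OF _ bl]) (use Suc.prems(1) in auto)
    then show ?thesis
      by (rule Ck_on_cong[OF aff_open[OF U Al], rotated]) (auto simp: fdg algebra_simps)
  qed
  have "\<forall>x\<in>?V. g differentiable (at x)" using gd by (auto intro: differentiableI)
  then show ?case using ck by simp
qed

lemma comp2:
  fixes f :: "'b::real_normed_vector \<Rightarrow> real" and Al :: "'a::real_normed_vector \<Rightarrow> 'b"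
  assumes C: "C2at f (Al x0 + c)" and Al: "bounded_linear Al" and l: "bounded_linear l"
    and m: "bounded_linear m"
    and g: "\<And>x. g x = a * f (Al x + c) + l x + d + \<kappa> * (m x + d')\<^sup>2"
  shows "C2at g x0"
    and "dirD g x0 v = a * dirD f (Al x0 + c) (Al v) + l v + 2 * \<kappa> * (m x0 + d') * m v"
    and "dirD2 g x0 v w = a * dirD2 f (Al x0 + c) (Al v) (Al w) + 2 * \<kappa> * m v * m w"
proof -
  obtain U where U: "open U" "Al x0 + c \<in> U" "\<forall>y\<in>U. f differentiable (at y)"
    and F: "\<And>v. (\<lambda>y. frechet_derivative f (at y) v) differentiable (at (Al x0 + c))"
    using C unfolding C2at_def by blast
  let ?V = "{x. Al x + c \<in> U}"
  have V: "open ?V" "x0 \<in> ?V" using aff_open[OF U(1) Al] U(2) by auto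
  have gg: "g = (\<lambda>x. a * f (Al x + c) + l x + d + \<kappa> * (m x + d')\<^sup>2)" using g by auto
  have gd: "(g has_derivative (\<lambda>v. a * frechet_derivative f (at (Al x + c)) (Al v) + l v + 2 * \<kappa> * (m x + d') * m v)) (at x)"
    if "x \<in> ?V" for x
  proof -
    have "f differentiable (at (Al x + c))" using U(3) that by simp
    then show ?thesis unfolding gg by (rule g_deriv[OF _ Al l m])
  qed
  have fdg: "frechet_derivative g (at x) v = a * frechet_derivative f (at (Al x + c)) (Al v) + l v + 2 * \<kappa> * (m x + d') * m v"
    if "x \<in> ?V" for x v
    by (simp add: frechet_derivative_at[OF gd[OF that], symmetric])
  have R: "((\<lambda>x. frechet_derivative g (at x) v) has_derivative
     (\<lambda>w. a * frechet_derivative (\<lambda>y. frechet_derivative f (at y) (Al v)) (at (Al x0 + c)) (Al w) + 2 * \<kappa> * m v * m w)) (at x0)" for v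
  proof -
    have bl: "bounded_linear (\<lambda>x. 2 * \<kappa> * m v * m x)"
      using bounded_linear_compose[OF bounded_linear_mult_right m] by blast
    have "((\<lambda>x. a * frechet_derivative f (at (Al x + c)) (Al v) + 2 * \<kappa> * m v * m x + (l v + 2 * \<kappa> * d' * m v) + 0 * (m x + d')\<^sup>2)
       has_derivative (\<lambda>w. a * frechet_derivative (\<lambda>y. frechet_derivative f (at y) (Al v)) (at (Al x0 + c)) (Al w) + 2 * \<kappa> * m v * m w + 2 * 0 * (m x0 + d') * m w)) (at x0)"
      by (rule g_deriv[OF F Al bl m])
    then have "((\<lambda>x. a * frechet_derivative f (at (Al x + c)) (Al v) + 2 * \<kappa> * m v * m x + (l v + 2 * \<kappa> * d' * m v) + 0 * (m x + d')\<^sup>2)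
       has_derivative (\<lambda>w. a * frechet_derivative (\<lambda>y. frechet_derivative f (at y) (Al v)) (at (Al x0 + c)) (Al w) + 2 * \<kappa> * m v * m w)) (at x0 within UNIV)"
      by simp
    from has_derivative_transform_within_open[OF this V] show ?thesis
      by (simp add: fdg algebra_simps)
  qed
  show "C2at g x0" unfolding C2at_def using V gd R by (auto intro: differentiableI)
  show "dirD g x0 v = a * dirD f (Al x0 + c) (Al v) + l v + 2 * \<kappa> * (m x0 + d') * m v"
    unfolding dirD_def using fdg V(2) by simp
  show "dirD2 g x0 v w = a * dirD2 f (Al x0 + c) (Al v) (Al w) + 2 * \<kappa> * m v * m w"
    unfolding dirD2_def by (simp add: frechet_derivative_at[OF R[of v], symmetric] algebra_simps)
qed



lemma C2at_diff: "C2at f p \<Longrightarrow> f differentiable (at p)"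
  unfolding C2at_def by blast

lemma dirD_bl: "C2at f p \<Longrightarrow> bounded_linear (dirD f p)"
proof -
  assume "C2at f p"
  then have "(f has_derivative frechet_derivative f (at p)) (at p)"
    using C2at_diff frechet_derivative_works by blast
  then have "bounded_linear (frechet_derivative f (at p))" by (rule has_derivative_bounded_linear)
  moreover have "dirD f p = frechet_derivative f (at p)" by (rule ext) (simp add: dirD_def)
  ultimately show ?thesis by simp
qed

lemma dirD2_bl_w: "C2at f p \<Longrightarrow> bounded_linear (dirD2 f p v)"
proof -
  assume "C2at f p"
  then have "(\<lambda>x. frechet_derivative f (at x) v) differentiable (at p)" unfolding C2at_def by blast
  then have "((\<lambda>x. frechet_derivative f (at x) v) has_derivative
      frechet_derivative (\<lambda>x. frechet_derivative f (at x) v) (at p)) (at p)"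
    using frechet_derivative_works by blast
  then have "bounded_linear (frechet_derivative (\<lambda>x. frechet_derivative f (at x) v) (at p))"
    by (rule has_derivative_bounded_linear)
  moreover have "dirD2 f p v = frechet_derivative (\<lambda>x. frechet_derivative f (at x) v) (at p)"
    by (rule ext) (simp add: dirD2_def)
  ultimately show ?thesis by simp
qed

lemma dirD2_comb:
  assumes "C2at f p"
  shows "dirD2 f p (r1 *\<^sub>R v1 + r2 *\<^sub>R v2) w = r1 * dirD2 f p v1 w + r2 * dirD2 f p v2 w"
proof -
  obtain U where U: "open U" "p \<in> U" "\<forall>y\<in>U. f differentiable (at y)"
    and F: "\<And>v. (\<lambda>y. frechet_derivative f (at y) v) differentiable (at p)"
    using assms unfolding C2at_def by blast
  let ?F = "\<lambda>v y. frechet_derivative f (at y) v"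
  have Fd: "(?F v has_derivative frechet_derivative (?F v) (at p)) (at p)" for v
    using F frechet_derivative_works by blast
  have S: "((\<lambda>y. r1 * ?F v1 y + r2 * ?F v2 y) has_derivative
      (\<lambda>w. r1 * frechet_derivative (?F v1) (at p) w + r2 * frechet_derivative (?F v2) (at p) w)) (at p)"
    by (intro has_derivative_add has_derivative_mult_right Fd)
  have eq: "r1 * ?F v1 y + r2 * ?F v2 y = ?F (r1 *\<^sub>R v1 + r2 *\<^sub>R v2) y" if "y \<in> U" for y
  proof -
    have "bounded_linear (frechet_derivative f (at y))"
      using U(3) that frechet_derivative_works has_derivative_bounded_linear by blast
    then have "linear (frechet_derivative f (at y))" by (rule bounded_linear.linear)
    then show ?thesis by (simp add: linear_add linear_scale)
  qed
  have S2: "(?F (r1 *\<^sub>R v1 + r2 *\<^sub>R v2) has_derivative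
      (\<lambda>w. r1 * frechet_derivative (?F v1) (at p) w + r2 * frechet_derivative (?F v2) (at p) w)) (at p within UNIV)"
    using has_derivative_transform_within_open[of _ _ p UNIV U, OF _ U(1,2), OF S[simplified] eq] by simp
  show ?thesis unfolding dirD2_def
    by (simp add: frechet_derivative_at[OF S2[simplified], symmetric])
qed

lemma dirD2_bl_v:
  fixes f :: "'a::euclidean_space \<Rightarrow> real"
  assumes "C2at f p" shows "bounded_linear (\<lambda>v. dirD2 f p v w)"
proof -
  have "linear (\<lambda>v. dirD2 f p v w)"
  proof (rule linearI)
    show "dirD2 f p (x + y) w = dirD2 f p x w + dirD2 f p y w" for x y
      using dirD2_comb[OF assms, of 1 x 1 y w] by simp
    show "dirD2 f p (r *\<^sub>R x) w = r *\<^sub>R dirD2 f p x w" for r x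
      using dirD2_comb[OF assms, of r x 0 x w] by simp
  qed
  then show ?thesis using linear_conv_bounded_linear by blast
qed



definition dzg :: "((complex^'i::finite) \<times> real \<Rightarrow> real) \<Rightarrow> 'i \<Rightarrow> complex" where
  "dzg G a = (complex_of_real (G (ex a)) - \<i> * complex_of_real (G (ey a))) / 2"

definition hz :: "((complex^'i::finite) \<times> real \<Rightarrow> (complex^'i) \<times> real \<Rightarrow> real) \<Rightarrow> 'i \<Rightarrow> 'i \<Rightarrow> complex" where
  "hz B a b = (complex_of_real (B (ex b) (ex a)) + \<i> * complex_of_real (B (ey b) (ex a))
      - \<i> * complex_of_real (B (ex b) (ey a)) + complex_of_real (B (ey b) (ey a))) / 4"

definition gsq :: "((complex^'i::finite) \<times> real \<Rightarrow> real) \<Rightarrow> real" where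
  "gsq G = (\<Sum>a\<in>UNIV. (cmod (dzg G a))\<^sup>2)"

definition Pm :: "((complex^'i::finite) \<times> real \<Rightarrow> real) \<Rightarrow> 'i \<Rightarrow> 'i \<Rightarrow> complex" where
  "Pm G a b = (if a = b then 1 else 0) - dzg G a * cnj (dzg G b) / complex_of_real (gsq G)"

definition levi_gen :: "((complex^'i::finite) \<times> real \<Rightarrow> real) \<Rightarrow> ((complex^'i) \<times> real \<Rightarrow> (complex^'i) \<times> real \<Rightarrow> real) \<Rightarrow> real" where
  "levi_gen G B = Re (\<Sum>a\<in>UNIV. \<Sum>b\<in>UNIV. Pm G a b * hz B a b)"

lemma levi_eq: "levi f p = levi_gen (dirD f p) (dirD2 f p)"
proof -
  have 1: "dz f p a = dzg (dirD f p) a" for a by (simp add: dz_def dzg_def complex_eq_iff)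
  have 2: "dzb f p a = cnj (dzg (dirD f p) a)" for a by (simp add: dzb_def dzg_def complex_eq_iff)
  have 3: "gradsq f p = gsq (dirD f p)" by (simp add: gradsq_def gsq_def 1)
  have 4: "dzdzb f p a b = hz (dirD2 f p) a b" for a b by (simp add: dzdzb_def hz_def)
  show ?thesis unfolding levi_def levi_gen_def Pm_def 1 2 3 4 ..
qed

lemma levi_gen_negG: "levi_gen (\<lambda>v. - G v) B = levi_gen G B"
proof -
  have 1: "dzg (\<lambda>v. - G v) a = - dzg G a" for a by (simp add: dzg_def complex_eq_iff)
  have 2: "gsq (\<lambda>v. - G v) = gsq G" by (simp add: gsq_def 1)
  have 3: "Pm (\<lambda>v. - G v) a b = Pm G a b" for a b by (simp add: Pm_def 1 2)
  show ?thesis by (simp add: levi_gen_def 3)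
qed

lemma levi_gen_add: "levi_gen G (\<lambda>v w. B1 v w + B2 v w) = levi_gen G B1 + levi_gen G B2"
proof -
  have "hz (\<lambda>v w. B1 v w + B2 v w) a b = hz B1 a b + hz B2 a b" for a b
    by (simp add: hz_def algebra_simps add_divide_distrib[symmetric])
  then show ?thesis by (simp add: levi_gen_def distrib_left sum.distrib)
qed

lemma levi_gen_scale: "levi_gen G (\<lambda>v w. r * B v w) = r * levi_gen G B"
proof -
  have "hz (\<lambda>v w. r * B v w) a b = complex_of_real r * hz B a b" for a b
    by (simp add: hz_def algebra_simps)
  then have "(\<Sum>a\<in>UNIV. \<Sum>b\<in>UNIV. Pm G a b * hz (\<lambda>v w. r * B v w) a b) =
      complex_of_real r * (\<Sum>a\<in>UNIV. \<Sum>b\<in>UNIV. Pm G a b * hz B a b)"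
    by (simp add: sum_distrib_left algebra_simps)
  then show ?thesis by (simp add: levi_gen_def)
qed

lemma levi_gen_transp: "levi_gen G (\<lambda>v w. B w v) = levi_gen G B"
proof -
  have 1: "hz (\<lambda>v w. B w v) a b = cnj (hz B b a)" for a b
    by (simp add: hz_def complex_eq_iff)
  have 2: "Pm G a b = cnj (Pm G b a)" for a b
    by (simp add: Pm_def ac_simps)
  have "(\<Sum>a\<in>UNIV. \<Sum>b\<in>UNIV. Pm G a b * hz (\<lambda>v w. B w v) a b) =
        (\<Sum>a\<in>UNIV. \<Sum>b\<in>UNIV. cnj (Pm G b a * hz B b a))"
    apply (intro sum.cong refl)
    apply (subst 2)
    apply (simp add: 1)
    done
  also have "\<dots> = cnj (\<Sum>a\<in>UNIV. \<Sum>b\<in>UNIV. Pm G b a * hz B b a)"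
    by (simp add: cnj_sum)
  also have "\<dots> = cnj (\<Sum>b\<in>UNIV. \<Sum>a\<in>UNIV. Pm G b a * hz B b a)"
    by (subst sum.swap) (rule refl)
  finally show ?thesis by (simp add: levi_gen_def)
qed

lemma cs_form:
  fixes w l :: "'i::finite \<Rightarrow> complex"
  shows "0 \<le> Re (\<Sum>a\<in>UNIV. \<Sum>b\<in>UNIV. ((if a = b then 1 else 0)
           - w a * cnj (w b) / complex_of_real (\<Sum>c\<in>UNIV. (cmod (w c))\<^sup>2)) * (l a * cnj (l b)))"
proof -
  define g where "g = (\<Sum>c\<in>UNIV. (cmod (w c))\<^sup>2)"
  define S where "S = (\<Sum>a\<in>UNIV. w a * l a)"
  define N where "N = (\<Sum>a\<in>UNIV. (cmod (l a))\<^sup>2)"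
  have e1: "(\<Sum>a\<in>UNIV. \<Sum>b\<in>UNIV. (if a = b then 1 else 0) * (l a * cnj (l b))) = complex_of_real N"
  proof -
    have "(\<Sum>a\<in>UNIV. \<Sum>b\<in>UNIV. (if a = b then 1 else 0) * (l a * cnj (l b))) = (\<Sum>a\<in>UNIV. l a * cnj (l a))"
    proof -
      have i: "(if a = b then 1 else 0) * X = (if a = b then X else 0)" for a b :: 'i and X :: complex by simp
      show ?thesis by (simp only: i sum.delta' finite UNIV_I if_True)
    qed
    also have "\<dots> = (\<Sum>a\<in>UNIV. complex_of_real ((cmod (l a))\<^sup>2))"
      by (intro sum.cong refl) (simp only: complex_norm_square)
    finally show ?thesis by (simp only: N_def of_real_sum)
  qed
  have e2: "(\<Sum>a\<in>UNIV. \<Sum>b\<in>UNIV. w a * cnj (w b) / complex_of_real g * (l a * cnj (l b)))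
      = (S * cnj S) / complex_of_real g"
  proof -
    have "(\<Sum>a\<in>UNIV. \<Sum>b\<in>UNIV. w a * cnj (w b) / complex_of_real g * (l a * cnj (l b)))
        = (\<Sum>a\<in>UNIV. \<Sum>b\<in>UNIV. (w a * l a) * cnj (w b * l b)) / complex_of_real g"
      by (simp add: sum_divide_distrib algebra_simps)
    also have "(\<Sum>a\<in>UNIV. \<Sum>b\<in>UNIV. (w a * l a) * cnj (w b * l b)) = S * cnj S"
      by (simp add: S_def sum_product cnj_sum)
    finally show ?thesis .
  qed
  have SS: "S * cnj S = complex_of_real ((cmod S)\<^sup>2)" by (simp only: complex_norm_square)
  have main: "Re (\<Sum>a\<in>UNIV. \<Sum>b\<in>UNIV. ((if a = b then 1 else 0)
           - w a * cnj (w b) / complex_of_real g) * (l a * cnj (l b))) = N - (cmod S)\<^sup>2 / g"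
  proof -
    have "(\<Sum>a\<in>UNIV. \<Sum>b\<in>UNIV. ((if a = b then 1 else 0)
           - w a * cnj (w b) / complex_of_real g) * (l a * cnj (l b))) =
       (\<Sum>a\<in>UNIV. \<Sum>b\<in>UNIV. (if a = b then 1 else 0) * (l a * cnj (l b))) -
       (\<Sum>a\<in>UNIV. \<Sum>b\<in>UNIV. w a * cnj (w b) / complex_of_real g * (l a * cnj (l b)))"
      by (simp only: left_diff_distrib sum_subtractf)
    also have "\<dots> = complex_of_real (N - (cmod S)\<^sup>2 / g)"
      by (simp only: e1 e2 SS of_real_diff of_real_divide)
    finally show ?thesis by simp
  qed
  have cs: "(cmod S)\<^sup>2 \<le> g * N"
  proof -
    have "cmod S \<le> (\<Sum>a\<in>UNIV. cmod (w a) * cmod (l a))"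
      unfolding S_def by (rule order_trans[OF norm_sum]) (simp add: norm_mult)
    also have "\<dots> \<le> L2_set (\<lambda>a. cmod (w a)) UNIV * L2_set (\<lambda>a. cmod (l a)) UNIV"
      using L2_set_mult_ineq[of "\<lambda>a. cmod (w a)" "\<lambda>a. cmod (l a)" UNIV] by simp
    finally have "(cmod S)\<^sup>2 \<le> (L2_set (\<lambda>a. cmod (w a)) UNIV * L2_set (\<lambda>a. cmod (l a)) UNIV)\<^sup>2"
      by (simp add: power_mono)
    also have "\<dots> = g * N"
      by (simp add: power_mult_distrib L2_set_def g_def N_def sum_nonneg)
    finally show ?thesis .
  qed
  have g0: "0 \<le> g" by (simp add: g_def sum_nonneg)
  have "0 \<le> N - (cmod S)\<^sup>2 / g"
  proof (cases "g = 0")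
    case True then show ?thesis by (simp add: N_def sum_nonneg)
  next
    case False
    then have "(cmod S)\<^sup>2 / g \<le> N" using cs g0 by (simp add: divide_le_eq mult.commute)
    then show ?thesis by simp
  qed
  then show ?thesis using main by (simp add: g_def)
qed

lemma levi_gen_rank1: "0 \<le> levi_gen G (\<lambda>v w. c v * c w)"
proof -
  have 1: "hz (\<lambda>v w. c v * c w) a b = dzg c a * cnj (dzg c b)" for a b
    by (simp add: hz_def dzg_def complex_eq_iff algebra_simps)
  show ?thesis unfolding levi_gen_def Pm_def gsq_def 1 by (rule cs_form)
qed



lemma deriv1:
  fixes k :: "real \<Rightarrow> real"
  assumes "(k has_derivative L) (at s)" shows "(k has_real_derivative L 1) (at s)"
proof -
  have "bounded_linear L" using assms by (rule has_derivative_bounded_linear)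
  then obtain c where c: "L = (\<lambda>x. x * c)" using real_bounded_linear by blast
  have "(k has_derivative (\<lambda>x. x * c)) (at s)" using assms c by simp
  then have "(k has_derivative (*) c) (at s)" by (rule has_derivative_eq_rhs) (auto simp: mult.commute)
  then show ?thesis unfolding has_field_derivative_def c by simp
qed

lemma oneD:
  fixes k :: "real \<Rightarrow> real"
  assumes C: "C2at k 0" and mx: "\<exists>r>0. \<forall>s. \<bar>s\<bar> < r \<longrightarrow> k s \<le> k 0"
  shows "dirD k 0 1 = 0" and "dirD2 k 0 1 1 \<le> 0"
proof -
  obtain U where U: "open U" "0 \<in> U" "\<forall>y\<in>U. k differentiable (at y)"
    and F: "(\<lambda>y. frechet_derivative k (at y) 1) differentiable (at 0)"
    using C unfolding C2at_def by blast
  obtain r where r: "r > 0" "\<And>s. \<bar>s\<bar> < r \<Longrightarrow> k s \<le> k 0" using mx by blast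
  let ?k1 = "\<lambda>y. frechet_derivative k (at y) 1"
  have D: "(k has_real_derivative ?k1 s) (at s)" if "s \<in> U" for s
    using U(3) that frechet_derivative_works deriv1 by blast
  have D0: "?k1 0 = 0"
    by (rule DERIV_local_max[OF D[OF U(2)] r(1)]) (use r(2) in auto)
  then show "dirD k 0 1 = 0" by (simp add: dirD_def)
  have D1: "(?k1 has_real_derivative frechet_derivative ?k1 (at 0) 1) (at 0)"
    using F frechet_derivative_works deriv1 by blast
  show "dirD2 k 0 1 1 \<le> 0"
  proof (rule ccontr)
    assume "\<not> dirD2 k 0 1 1 \<le> 0"
    then have pos: "0 < frechet_derivative ?k1 (at 0) 1" by (simp add: dirD2_def)
    obtain d where d: "d > 0" "\<And>h. h > 0 \<Longrightarrow> h < d \<Longrightarrow> ?k1 0 < ?k1 (0 + h)"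
      using DERIV_pos_inc_right[OF D1 pos] by blast
    obtain e where e: "e > 0" "ball 0 e \<subseteq> U" using U(1,2) open_contains_ball by blast
    define s where "s = min d (min r e) / 2"
    have s: "0 < s" "s < d" "s < r" "s < e" using d(1) r(1) e(1) by (auto simp: s_def)
    have "\<exists>z>0. z < s \<and> k s - k 0 = (s - 0) * ?k1 z"
    proof (rule MVT2[OF s(1)])
      fix x :: real assume "0 \<le> x" "x \<le> s"
      then have "x \<in> U" using e(2) s(4) by (auto simp: dist_real_def)
      then show "(k has_real_derivative ?k1 x) (at x)" by (rule D)
    qed
    then obtain z where z: "0 < z" "z < s" "k s - k 0 = s * ?k1 z" by auto
    have "?k1 z > 0" using d(2)[of z] z s D0 by simp
    then have "k s > k 0" using z(3) s(1) by (simp add: algebra_simps)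
    moreover have "k s \<le> k 0" using r(2)[of s] s by simp
    ultimately show False by simp
  qed
qed

lemma loc_pull:
  assumes "\<exists>r>0. \<forall>y\<in>S. dist y y0 < r \<longrightarrow> P y" "isCont F x0" "F x0 = y0"
    "\<And>x. x \<in> T \<Longrightarrow> F x \<in> S"
  shows "\<exists>d>0. \<forall>x\<in>T. dist x x0 < d \<longrightarrow> P (F x)"
proof -
  obtain r where r: "r > 0" "\<forall>y\<in>S. dist y y0 < r \<longrightarrow> P y" using assms(1) by blast
  obtain d where d: "d > 0" "\<And>x. dist x x0 < d \<Longrightarrow> dist (F x) (F x0) < r"
    using assms(2) r(1) unfolding continuous_at_eps_delta by blast
  show ?thesis using d r assms(3,4) by blast
qed



definition Pr :: "(complex^('m::finite option)) \<times> real \<Rightarrow> ((real^('m option)) \<times> (real^'m)) \<times> real" where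
  "Pr x = (proj (fst x), snd x)"

definition ImN :: "(complex^('m::finite option)) \<times> real \<Rightarrow> real" where
  "ImN x = Im (fst x $ None)"

definition E :: "((real^('m::finite option)) \<times> (real^'m)) \<times> real \<Rightarrow> (complex^('m option)) \<times> real" where
  "E q = (embed (fst q), snd q)"

lemma linear_Pr: "bounded_linear (Pr :: (complex^('m::finite option)) \<times> real \<Rightarrow> _)"
proof -
  have "linear (Pr :: (complex^('m::finite option)) \<times> real \<Rightarrow> _)"
    by (rule linearI) (auto simp: Pr_def proj_def vec_eq_iff)
  then show ?thesis using linear_conv_bounded_linear by blast
qed

lemma linear_ImN: "bounded_linear (ImN :: (complex^('m::finite option)) \<times> real \<Rightarrow> _)"
proof -
  have "linear (ImN :: (complex^('m::finite option)) \<times> real \<Rightarrow> _)"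
    by (rule linearI) (auto simp: ImN_def)
  then show ?thesis using linear_conv_bounded_linear by blast
qed

lemma linear_E: "bounded_linear (E :: _ \<Rightarrow> (complex^('m::finite option)) \<times> real)"
proof -
  have "linear (E :: _ \<Rightarrow> (complex^('m::finite option)) \<times> real)"
    by (rule linearI) (auto simp: E_def embed_def vec_eq_iff complex_eq_iff split: option.split)
  then show ?thesis using linear_conv_bounded_linear by blast
qed

lemma proj_embed: "proj (embed x) = x"
  by (auto simp: proj_def embed_def vec_eq_iff prod_eq_iff)

lemma Pr_E: "Pr (E q) = q"
  by (simp add: Pr_def E_def proj_embed)

lemma ImN_E: "ImN (E q) = 0"
  by (simp add: ImN_def E_def embed_def)

lemma decomp: "x = E (Pr x) + ImN x *\<^sub>R ey None"
  by (auto simp: prod_eq_iff vec_eq_iff E_def Pr_def ImN_def embed_def proj_def ey_def axis_def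
       complex_eq_iff split: option.split)

lemma Pr_ey_None: "Pr (ey None) = 0"
  by (simp add: Pr_def ey_def proj_def axis_def vec_eq_iff zero_prod_def)

lemma ImN_ey: "ImN (ey a) = (if a = None then 1 else 0)"
  by (simp add: ImN_def ey_def axis_def)

lemma ImN_ex: "ImN (ex a) = 0"
  by (simp add: ImN_def ex_def axis_def)

lemma ImN_et: "ImN et = 0"
  by (simp add: ImN_def et_def)

lemma Pr_et: "Pr et = (0, 1)"
  by (simp add: Pr_def et_def proj_def vec_eq_iff zero_prod_def)



lemma forward:
  fixes D :: "((real^('m::finite option)) \<times> (real^'m)) set"
    and u :: "((real^('m option)) \<times> (real^'m)) \<times> real \<Rightarrow> real"
  assumes wH: "weak_sol_H {p. proj (fst p) \<in> D \<and> snd p > 0}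
           (\<lambda>p. Im (fst p $ None) - u (proj (fst p), snd p))"
    and cu: "continuous_on (D \<times> {0<..}) u"
  shows "weak_sol_H0 (D \<times> {0<..}) u"
proof -
  let ?\<Omega> = "{p. proj (fst p) \<in> D \<and> snd p > 0} :: ((complex^('m option)) \<times> real) set"
  let ?v = "\<lambda>p::(complex^('m option)) \<times> real. Im (fst p $ None) - u (proj (fst p), snd p)"
  let ?Dt = "D \<times> {0<..}"
  have vv: "?v x = ImN x - u (Pr x)" for x by (simp add: ImN_def Pr_def)
  have key: "(loc_max ?Dt (\<lambda>r. u r - \<psi> r) q \<longrightarrow> dt0 \<psi> q \<le> levi0 \<psi> q) \<and>
             (loc_min ?Dt (\<lambda>r. u r - \<psi> r) q \<longrightarrow> dt0 \<psi> q \<ge> levi0 \<psi> q)"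
    if q: "q \<in> ?Dt" and U: "open U" "q \<in> U" and sm: "smooth_on U \<psi>" for q \<psi> U
  proof -
    define p :: "(complex^('m option)) \<times> real" where "p = E q"
    have Prp: "Pr p = q" by (simp add: p_def Pr_E)
    have pO: "p \<in> ?\<Omega>" using q Prp by (auto simp: Pr_def)
    define \<phi> where "\<phi> = (\<lambda>x. ImN x - \<psi> (Pr x))"
    have \<phi>form: "\<phi> x = (-1) * \<psi> (Pr x + 0) + ImN x + 0 + 0 * (ImN x + 0)\<^sup>2" for x
      by (simp add: \<phi>_def)
    let ?U' = "{x. Pr x + 0 \<in> U}"
    have U': "open ?U'" "p \<in> ?U'"
      by (rule aff_open[OF U(1) linear_Pr]) (use U(2) Prp in simp)
    have sm': "smooth_on ?U' \<phi>"
      unfolding smooth_on_def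
    proof
      fix k
      have "Ck_on k U \<psi>" using sm unfolding smooth_on_def by blast
      then show "Ck_on k ?U' \<phi>"
        by (rule Ck_comp[OF U(1) linear_Pr linear_ImN _ linear_ImN]) (use \<phi>form in blast)
    qed
    have C: "C2at \<psi> (Pr p + 0)" using smooth_C2at[OF sm U(1)] U(2) Prp by simp
    have d1: "dirD \<phi> p v = - dirD \<psi> q (Pr v) + ImN v" for v
      using comp2(2)[OF C linear_Pr linear_ImN linear_ImN \<phi>form] Prp by simp
    have d2: "dirD2 \<phi> p v w = - dirD2 \<psi> q (Pr v) (Pr w)" for v w
      using comp2(3)[OF C linear_Pr linear_ImN linear_ImN \<phi>form] Prp by simp
    have liftform: "lift \<psi> x = 1 * \<psi> (Pr x + 0) + (- ImN x) + 0 + 0 * (ImN x + 0)\<^sup>2" for x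
      by (simp add: lift_def Pr_def ImN_def)
    have blm: "bounded_linear (\<lambda>x. - ImN x :: real)"
      using bounded_linear_minus[OF linear_ImN] by simp
    have l1: "dirD (lift \<psi>) p v = dirD \<psi> q (Pr v) - ImN v" for v
      using comp2(2)[OF C linear_Pr blm linear_ImN liftform] Prp by simp
    have l2: "dirD2 (lift \<psi>) p v w = dirD2 \<psi> q (Pr v) (Pr w)" for v w
      using comp2(3)[OF C linear_Pr blm linear_ImN liftform] Prp by simp
    have L0: "levi0 \<psi> q = levi_gen (dirD (lift \<psi>) p) (dirD2 (lift \<psi>) p)"
      by (simp add: levi0_def levi_eq p_def E_def)
    have e1: "dirD \<phi> p = (\<lambda>v. - dirD (lift \<psi>) p v)" by (rule ext) (simp add: d1 l1)
    have e2: "dirD2 \<phi> p = (\<lambda>v w. (-1) * dirD2 (lift \<psi>) p v w)" by (intro ext) (simp add: d2 l2)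
    have Lphi: "levi \<phi> p = - levi0 \<psi> q"
      unfolding levi_eq e1 e2 levi_gen_negG levi_gen_scale L0 by simp
    have Cq: "C2at \<psi> q" using C Prp by simp
    have bl: "bounded_linear (dirD \<psi> q)" by (rule dirD_bl[OF Cq])
    have dtphi: "dt \<phi> p = - dt0 \<psi> q"
      by (simp add: dt_def dt0_def d1 Pr_et ImN_et)
    have ndeg: "\<not> (\<forall>a. dz \<phi> p a = 0)"
    proof
      assume "\<forall>a. dz \<phi> p a = 0"
      then have "dz \<phi> p None = 0" by blast
      moreover have "dirD \<phi> p (ey None) = 1"
        by (simp add: d1 Pr_ey_None ImN_ey linear_0[OF bounded_linear.linear[OF bl]])
      ultimately show False by (simp add: dz_def complex_eq_iff)
    qed
    have diffv: "?v x - \<phi> x = - (u (Pr x) - \<psi> (Pr x))" for x by (simp add: vv \<phi>_def)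
    have OmDt: "Pr x \<in> ?Dt" if "x \<in> ?\<Omega>" for x using that by (auto simp: Pr_def)
    have isc: "isCont Pr p" by (rule linear_continuous_at[OF linear_Pr])
    have wp: "\<forall>p\<in>?\<Omega>. \<forall>\<phi> U. open U \<and> p \<in> U \<and> smooth_on U \<phi> \<longrightarrow>
        (loc_max ?\<Omega> (\<lambda>q. ?v q - \<phi> q) p \<longrightarrow>
           (if (\<forall>a. dz \<phi> p a = 0)
            then (\<exists>\<eta>::complex^('m option). norm \<eta> \<le> 1 \<and> dt \<phi> p \<le> levi_deg \<phi> p \<eta>)
            else dt \<phi> p \<le> levi \<phi> p)) \<and>
        (loc_min ?\<Omega> (\<lambda>q. ?v q - \<phi> q) p \<longrightarrow>
           (if (\<forall>a. dz \<phi> p a = 0)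
            then (\<exists>\<eta>::complex^('m option). norm \<eta> \<le> 1 \<and> dt \<phi> p \<ge> levi_deg \<phi> p \<eta>)
            else dt \<phi> p \<ge> levi \<phi> p))"
      using wH unfolding weak_sol_H_def by blast
    have W: "(loc_max ?\<Omega> (\<lambda>q. ?v q - \<phi> q) p \<longrightarrow> dt \<phi> p \<le> levi \<phi> p) \<and>
             (loc_min ?\<Omega> (\<lambda>q. ?v q - \<phi> q) p \<longrightarrow> dt \<phi> p \<ge> levi \<phi> p)"
      using wp[rule_format, OF pO, of ?U' \<phi>] U' sm' unfolding if_not_P[OF ndeg] by blast
    show ?thesis
    proof (intro conjI impI)
      assume "loc_max ?Dt (\<lambda>r. u r - \<psi> r) q"
      then have "\<exists>r>0. \<forall>y\<in>?Dt. dist y q < r \<longrightarrow> u y - \<psi> y \<le> u q - \<psi> q" by (simp add: loc_max_def)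
      from loc_pull[OF this isc Prp, of ?\<Omega>] OmDt obtain d where
        d: "d > 0" "\<forall>x\<in>?\<Omega>. dist x p < d \<longrightarrow> u (Pr x) - \<psi> (Pr x) \<le> u q - \<psi> q" by blast
      have "loc_min ?\<Omega> (\<lambda>q. ?v q - \<phi> q) p"
        unfolding loc_min_def diffv
      proof (intro exI[of _ d] conjI ballI impI)
        fix x assume x: "x \<in> ?\<Omega>" "dist x p < d"
        have h: "u (Pr x) - \<psi> (Pr x) \<le> u q - \<psi> q" using d(2) x by blast
        then show "- (u (Pr p) - \<psi> (Pr p)) \<le> - (u (Pr x) - \<psi> (Pr x))" using Prp by simp
      qed (rule d(1))
      then have "dt \<phi> p \<ge> levi \<phi> p" using W by blast
      then show "dt0 \<psi> q \<le> levi0 \<psi> q" by (simp add: dtphi Lphi)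
    next
      assume "loc_min ?Dt (\<lambda>r. u r - \<psi> r) q"
      then have "\<exists>r>0. \<forall>y\<in>?Dt. dist y q < r \<longrightarrow> u q - \<psi> q \<le> u y - \<psi> y" by (simp add: loc_min_def)
      from loc_pull[OF this isc Prp, of ?\<Omega>] OmDt obtain d where
        d: "d > 0" "\<forall>x\<in>?\<Omega>. dist x p < d \<longrightarrow> u q - \<psi> q \<le> u (Pr x) - \<psi> (Pr x)" by blast
      have "loc_max ?\<Omega> (\<lambda>q. ?v q - \<phi> q) p"
        unfolding loc_max_def diffv
      proof (intro exI[of _ d] conjI ballI impI)
        fix x assume x: "x \<in> ?\<Omega>" "dist x p < d"
        have h: "u q - \<psi> q \<le> u (Pr x) - \<psi> (Pr x)" using d(2) x by blast
        then show "- (u (Pr x) - \<psi> (Pr x)) \<le> - (u (Pr p) - \<psi> (Pr p))" using Prp by simp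
      qed (rule d(1))
      then have "dt \<phi> p \<le> levi \<phi> p" using W by blast
      then show "dt0 \<psi> q \<ge> levi0 \<psi> q" by (simp add: dtphi Lphi)
    qed
  qed
  show ?thesis unfolding weak_sol_H0_def using cu key by blast
qed



lemma levi_gen_sym: "levi_gen G S = levi_gen G (\<lambda>v w. (1/2) * (S v w + S w v))"
proof -
  have "levi_gen G (\<lambda>v w. (1/2) * (S v w + S w v)) = (1/2) * (levi_gen G S + levi_gen G (\<lambda>v w. S w v))"
    apply (subst levi_gen_scale)
    apply (subst levi_gen_add)
    apply simp
    done
  then show ?thesis using levi_gen_transp[of G S] by simp
qed

lemma levi_compare:
  fixes Be :: "(complex^'i::finite) \<times> real \<Rightarrow> (complex^'i) \<times> real \<Rightarrow> real"
  assumes B1: "\<And>v w. B1 v w = - Be (v + a v *\<^sub>R e) (w + a w *\<^sub>R e)"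
    and lin1: "\<And>x y t w. Be (x + t *\<^sub>R y) w = Be x w + t * Be y w"
    and lin2: "\<And>v x y t. Be v (x + t *\<^sub>R y) = Be v x + t * Be v y"
    and g: "\<And>v. g v = (Be v e + Be e v) / 2" and c: "c \<noteq> 0" "Be e e = c"
    and a: "\<And>v. a v = - g v / c"
  shows "levi_gen G B1 = levi_gen G (\<lambda>v w. - Be v w) + (1/c) * levi_gen G (\<lambda>v w. g v * g w)"
proof -
  define S where "S = (\<lambda>v w. - (a w * Be v e + a v * Be e w + a v * a w * Be e e))"
  have B1e: "B1 = (\<lambda>v w. - Be v w + S v w)"
  proof (intro ext)
    fix v w
    have "Be (v + a v *\<^sub>R e) (w + a w *\<^sub>R e) = Be v w + a w * Be v e + a v * (Be e w + a w * Be e e)"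
      by (simp add: lin1 lin2 algebra_simps)
    then show "B1 v w = - Be v w + S v w" by (simp add: B1 S_def algebra_simps)
  qed
  have Ss: "(\<lambda>v w. (1/2) * (S v w + S w v)) = (\<lambda>v w. (1/c) * (g v * g w))"
  proof (intro ext)
    fix v w
    have "(1/2) * (S v w + S w v) = - (a w * g v + a v * g w + a v * a w * c)"
      by (simp add: S_def g c(2) algebra_simps add_divide_distrib)
    also have "\<dots> = (1/c) * (g v * g w)"
      using c(1) by (simp add: a field_simps power2_eq_square)
    finally show "(1/2) * (S v w + S w v) = (1/c) * (g v * g w)" .
  qed
  have "levi_gen G B1 = levi_gen G (\<lambda>v w. - Be v w) + levi_gen G S"
    unfolding B1e using levi_gen_add[of G "\<lambda>v w. - Be v w" S] by simp
  also have "levi_gen G S = (1/c) * levi_gen G (\<lambda>v w. g v * g w)"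
    using levi_gen_sym[of G S] levi_gen_scale[of G "1/c" "\<lambda>v w. g v * g w"] unfolding Ss by simp
  finally show ?thesis .
qed

lemma line_lemma:
  fixes \<phi> :: "(complex^('m::finite option)) \<times> real \<Rightarrow> real" and p
  assumes C: "C2at \<phi> p" and \<sigma>: "\<sigma> = 1 \<or> \<sigma> = -1"
    and mx: "\<exists>r>0. \<forall>s::real. \<bar>s\<bar> < r \<longrightarrow> \<sigma> * (s - \<phi> (s *\<^sub>R ey None + p)) \<le> \<sigma> * (0 - \<phi> p)"
  shows "dirD \<phi> p (ey None) = 1" "0 \<le> \<sigma> * dirD2 \<phi> p (ey None) (ey None)"
proof -
  define k where "k = (\<lambda>s::real. (-\<sigma>) * \<phi> ((\<lambda>s. s *\<^sub>R ey None) s + p) + \<sigma> * s + 0 + 0 * (\<sigma> * s + 0)\<^sup>2)"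
  have kf: "k s = (-\<sigma>) * \<phi> ((\<lambda>s. s *\<^sub>R ey None) s + p) + \<sigma> * s + 0 + 0 * (\<sigma> * s + 0)\<^sup>2" for s
    by (simp add: k_def)
  have bA: "bounded_linear (\<lambda>s::real. s *\<^sub>R (ey None :: (complex^('m option)) \<times> real))"
    by (rule bounded_linear_scaleR_left)
  have bl: "bounded_linear (\<lambda>s::real. \<sigma> * s)" by (rule bounded_linear_mult_right)
  have C': "C2at \<phi> ((\<lambda>s. s *\<^sub>R ey None) 0 + p)" using C by simp
  have k1: "dirD k 0 1 = - \<sigma> * dirD \<phi> p (ey None) + \<sigma>"
    using comp2(2)[OF C' bA bl bl kf, of 1] by simp
  have k2: "dirD2 k 0 1 1 = - \<sigma> * dirD2 \<phi> p (ey None) (ey None)"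
    using comp2(3)[OF C' bA bl bl kf, of 1 1] by simp
  have Ck: "C2at k 0" by (rule comp2(1)[OF C' bA bl bl kf])
  have mk: "\<exists>r>0. \<forall>s. \<bar>s\<bar> < r \<longrightarrow> k s \<le> k 0"
    using mx by (simp add: k_def algebra_simps)
  have s0: "\<sigma> \<noteq> 0" using \<sigma> by auto
  from oneD(1)[OF Ck mk] k1 have "\<sigma> * (1 - dirD \<phi> p (ey None)) = 0" by (simp add: algebra_simps)
  then show "dirD \<phi> p (ey None) = 1" using s0 by simp
  from oneD(2)[OF Ck mk] k2 show "0 \<le> \<sigma> * dirD2 \<phi> p (ey None) (ey None)" by simp
qed



lemma Pr_lin: "Pr (x + t *\<^sub>R y) = Pr x + t *\<^sub>R Pr y"
  by (simp add: Pr_def proj_def vec_eq_iff)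

lemma Pr_add: "Pr (x + y) = Pr x + Pr y"
  by (simp add: Pr_def proj_def vec_eq_iff)

lemma Pr_scale: "Pr (t *\<^sub>R y) = t *\<^sub>R Pr y"
  by (simp add: Pr_def proj_def vec_eq_iff)

lemma ImN_add: "ImN (x + y) = ImN x + ImN y"
  by (simp add: ImN_def)

lemma ImN_scale: "ImN (t *\<^sub>R y) = t * ImN y"
  by (simp add: ImN_def)

lemma ImN_lin: "ImN (x + t *\<^sub>R y) = ImN x + t * ImN y"
  by (simp add: ImN_def)

lemma embed0: "embed 0 = 0"
  by (simp add: embed_def vec_eq_iff complex_eq_iff zero_prod_def split: option.split)

lemma E01: "E (0, 1) = et"
  by (simp add: E_def et_def embed0)

lemma conv_core:
  fixes D :: "((real^('m::finite option)) \<times> (real^'m)) set"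
    and u :: "((real^('m option)) \<times> (real^'m)) \<times> real \<Rightarrow> real"
    and \<phi> :: "(complex^('m option)) \<times> real \<Rightarrow> real"
  assumes \<sigma>: "\<sigma> = 1 \<or> \<sigma> = -1"
    and H0: "weak_sol_H0 (D \<times> {0<..}) u"
    and pO: "p \<in> {p. proj (fst p) \<in> D \<and> snd p > 0}"
    and U: "open U" "p \<in> U" and sm: "smooth_on U \<phi>"
    and ext: "\<exists>r>0. \<forall>x\<in>{p. proj (fst p) \<in> D \<and> snd p > 0}. dist x p < r \<longrightarrow>
        \<sigma> * ((Im (fst x $ None) - u (proj (fst x), snd x)) - \<phi> x) \<le>
        \<sigma> * ((Im (fst p $ None) - u (proj (fst p), snd p)) - \<phi> p)"
    and \<epsilon>: "\<epsilon> > 0"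
  shows "dirD \<phi> p (ey None) = 1"
    and "\<sigma> * dt \<phi> p \<le> \<sigma> * levi \<phi> p + 2 * \<epsilon> * levi_gen (\<lambda>w. - dirD \<phi> p w) (\<lambda>v w. ImN v * ImN w)"
proof -
  let ?\<Omega> = "{p. proj (fst p) \<in> D \<and> snd p > 0} :: ((complex^('m option)) \<times> real) set"
  let ?Dt = "D \<times> {0<..}"
  let ?eN = "ey None :: (complex^('m option)) \<times> real"
  define v where "v = (\<lambda>x::(complex^('m option)) \<times> real. ImN x - u (Pr x))"
  have ext': "\<exists>r>0. \<forall>x\<in>?\<Omega>. dist x p < r \<longrightarrow> \<sigma> * (v x - \<phi> x) \<le> \<sigma> * (v p - \<phi> p)"
    using ext by (simp add: v_def ImN_def Pr_def)
  have \<sigma>2: "\<sigma> * \<sigma> = 1" using \<sigma> by auto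
  have C: "C2at \<phi> p" by (rule smooth_C2at[OF sm U(1,2)])
  have inO: "x \<in> ?\<Omega> \<longleftrightarrow> Pr x \<in> ?Dt" for x by (auto simp: Pr_def)
  have mx: "\<exists>r>0. \<forall>s::real. \<bar>s\<bar> < r \<longrightarrow> \<sigma> * (s - \<phi> (s *\<^sub>R ?eN + p)) \<le> \<sigma> * (0 - \<phi> p)"
  proof -
    have PF: "Pr (s *\<^sub>R ?eN + p) = Pr p" for s using Pr_lin[of p s ?eN] by (simp add: add.commute Pr_ey_None)
    have IF: "ImN (s *\<^sub>R ?eN + p) = s + ImN p" for s using ImN_lin[of p s ?eN] by (simp add: ImN_ey add.commute)
    have i1: "isCont (\<lambda>s::real. s *\<^sub>R ?eN) 0" by (rule linear_continuous_at[OF bounded_linear_scaleR_left])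
    have isc: "isCont (\<lambda>s::real. s *\<^sub>R ?eN + p) 0" by (rule continuous_add[OF i1 continuous_const])
    have FO: "s *\<^sub>R ?eN + p \<in> ?\<Omega>" for s
    proof -
      have "Pr p \<in> ?Dt" using pO by (simp only: inO)
      then show ?thesis by (simp only: inO PF)
    qed
    obtain d where d: "d > 0" "\<forall>s\<in>UNIV. dist s 0 < d \<longrightarrow> \<sigma> * (v (s *\<^sub>R ?eN + p) - \<phi> (s *\<^sub>R ?eN + p)) \<le> \<sigma> * (v p - \<phi> p)"
      using loc_pull[OF ext' isc _ FO, of UNIV] by auto
    show ?thesis
    proof (intro exI[of _ d] conjI allI impI)
      fix s :: real assume "\<bar>s\<bar> < d"
      then have "\<sigma> * (v (s *\<^sub>R ?eN + p) - \<phi> (s *\<^sub>R ?eN + p)) \<le> \<sigma> * (v p - \<phi> p)" using d(2) by (simp add: dist_real_def)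
      moreover have "v (s *\<^sub>R ?eN + p) = s + v p" by (simp add: v_def PF IF)
      ultimately show "\<sigma> * (s - \<phi> (s *\<^sub>R ?eN + p)) \<le> \<sigma> * (0 - \<phi> p)" by (simp add: algebra_simps)
    qed (rule d(1))
  qed
  have de1: "dirD \<phi> p ?eN = 1" and c0: "0 \<le> \<sigma> * dirD2 \<phi> p ?eN ?eN"
    using line_lemma[OF C \<sigma> mx] by auto
  then show "dirD \<phi> p (ey None) = 1" by simp
  define y0 where "y0 = ImN p"
  define q0 where "q0 = Pr p"
  define fe where "fe = (\<lambda>x. 1 * \<phi> ((\<lambda>x. x) x + 0) + (\<lambda>x. 0) x + 0 + (\<sigma> * \<epsilon>) * (ImN x + (- y0))\<^sup>2)"
  have feform: "fe x = 1 * \<phi> ((\<lambda>x. x) x + 0) + (\<lambda>x. 0) x + 0 + (\<sigma> * \<epsilon>) * (ImN x + (- y0))\<^sup>2" for x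
    by (simp add: fe_def)
  have blz: "bounded_linear (\<lambda>x::(complex^('m option)) \<times> real. 0::real)" by (rule bounded_linear_zero)
  have C1: "C2at \<phi> ((\<lambda>x. x) p + 0)" using C by simp
  have Cfe: "C2at fe p" using comp2(1)[OF C1 bounded_linear_ident blz linear_ImN feform] .
  have dfe: "dirD fe p w = dirD \<phi> p w" for w
    using comp2(2)[OF C1 bounded_linear_ident blz linear_ImN feform, of w] by (simp add: y0_def)
  have d2fe: "dirD2 fe p v w = dirD2 \<phi> p v w + 2 * (\<sigma> * \<epsilon>) * ImN v * ImN w" for v w
    using comp2(3)[OF C1 bounded_linear_ident blz linear_ImN feform, of v w] by simp
  define Be where "Be = dirD2 fe p"
  define ce where "ce = Be ?eN ?eN"
  have ce_eq: "ce = dirD2 \<phi> p ?eN ?eN + 2 * \<sigma> * \<epsilon>" by (simp add: ce_def Be_def d2fe ImN_ey)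
  have sce: "\<sigma> * ce > 0"
  proof -
    have "\<sigma> * ce = \<sigma> * dirD2 \<phi> p ?eN ?eN + 2 * (\<sigma> * \<sigma>) * \<epsilon>" by (simp add: ce_eq algebra_simps)
    then show ?thesis using c0 \<sigma>2 \<epsilon> by simp
  qed
  have ce0: "ce \<noteq> 0" using sce by auto
  define gam where "gam = (\<lambda>w. (1/2) * (Be w ?eN + Be ?eN w))"
  have bBv: "bounded_linear (\<lambda>w. Be w y)" for y unfolding Be_def by (rule dirD2_bl_v[OF Cfe])
  have bBw: "bounded_linear (Be y)" for y unfolding Be_def by (rule dirD2_bl_w[OF Cfe])
  have bgam: "bounded_linear gam" unfolding gam_def
    by (rule bounded_linear_compose[OF bounded_linear_mult_right bounded_linear_add[OF bBv bBw]])
  define Lam where "Lam = (\<lambda>q. (- 1 / ce) * gam (E q))"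
  have bLam: "bounded_linear Lam" unfolding Lam_def
    by (rule bounded_linear_compose[OF bounded_linear_mult_right bounded_linear_compose[OF bgam linear_E]])
  define Gl where "Gl = (\<lambda>q. E q + Lam q *\<^sub>R ?eN)"
  have bGl: "bounded_linear Gl" unfolding Gl_def
    by (rule bounded_linear_add[OF linear_E bounded_linear_compose[OF bounded_linear_scaleR_left bLam]])
  define cc where "cc = (y0 - Lam q0) *\<^sub>R ?eN"
  have PrG: "Pr (Gl q + cc) = q" for q
    by (simp add: Gl_def cc_def Pr_add Pr_scale Pr_E Pr_ey_None)
  have ImG: "ImN (Gl q + cc) = Lam q + (y0 - Lam q0)" for q
    by (simp add: Gl_def cc_def ImN_add ImN_scale ImN_E ImN_ey)
  have Gq0: "Gl q0 + cc = p"
  proof -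
    have "Gl q0 + cc = E q0 + (Lam q0 + (y0 - Lam q0)) *\<^sub>R ?eN"
      by (simp only: Gl_def cc_def scaleR_add_left add.assoc)
    also have "\<dots> = E (Pr p) + y0 *\<^sub>R ?eN" by (simp add: q0_def)
    also have "\<dots> = p" using decomp[of p] by (simp add: y0_def)
    finally show ?thesis .
  qed
  define ps where "ps = (\<lambda>q. (-1) * fe (Gl q + cc) + Lam q + (y0 - Lam q0) + 0 * (Lam q + 0)\<^sup>2)"
  have psform: "ps q = (-1) * fe (Gl q + cc) + Lam q + (y0 - Lam q0) + 0 * (Lam q + 0)\<^sup>2" for q
    by (simp add: ps_def)
  have Cfe': "C2at fe (Gl q0 + cc)" using Cfe Gq0 by simp
  have Cps: "C2at ps q0" using comp2(1)[OF Cfe' bGl bLam bLam psform] .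
  have dps: "dirD ps q0 w = - dirD fe p (Gl w) + Lam w" for w
    using comp2(2)[OF Cfe' bGl bLam bLam psform, of w] Gq0 by simp
  have d2ps: "dirD2 ps q0 v w = - Be (Gl v) (Gl w)" for v w
    using comp2(3)[OF Cfe' bGl bLam bLam psform, of v w] Gq0 by (simp add: Be_def)
  let ?U1 = "{x. (\<lambda>x. x) x + 0 \<in> U}"
  let ?U2 = "{q. Gl q + cc \<in> ?U1}"
  have U1o: "open ?U1" by (rule aff_open[OF U(1) bounded_linear_ident])
  have U2o: "open ?U2" by (rule aff_open[OF U1o bGl])
  have q0U2: "q0 \<in> ?U2" using Gq0 U(2) by simp
  have smps: "smooth_on ?U2 ps" unfolding smooth_on_def
  proof
    fix k
    have "Ck_on k U \<phi>" using sm unfolding smooth_on_def by blast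
    then have "Ck_on k ?U1 fe"
      by (rule Ck_comp[OF U(1) bounded_linear_ident linear_ImN _ blz]) (use feform in blast)
    then show "Ck_on k ?U2 ps"
      by (rule Ck_comp[OF U1o bGl bLam _ bLam]) (use psform in blast)
  qed
  define p0 where "p0 = (E q0 :: (complex^('m option)) \<times> real)"
  have Prp0: "Pr p0 = q0" by (simp add: p0_def Pr_E)
  have liftform: "lift ps x = 1 * ps (Pr x + 0) + (- ImN x) + 0 + 0 * (ImN x + 0)\<^sup>2" for x
    by (simp add: lift_def Pr_def ImN_def)
  have blm: "bounded_linear (\<lambda>x. - ImN x :: real)"
    using bounded_linear_minus[OF linear_ImN] by simp
  have Cps': "C2at ps (Pr p0 + 0)" using Cps Prp0 by simp
  have l1: "dirD (lift ps) p0 w = dirD ps q0 (Pr w) - ImN w" for w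
    using comp2(2)[OF Cps' linear_Pr blm linear_ImN liftform, of w] Prp0 by simp
  have l2: "dirD2 (lift ps) p0 v w = dirD2 ps q0 (Pr v) (Pr w)" for v w
    using comp2(3)[OF Cps' linear_Pr blm linear_ImN liftform, of v w] Prp0 by simp
  have L0: "levi0 ps q0 = levi_gen (dirD (lift ps) p0) (dirD2 (lift ps) p0)"
    by (simp add: levi0_def levi_eq p0_def E_def)
  have blfe: "bounded_linear (dirD fe p)" by (rule dirD_bl[OF Cfe])
  have dfelin: "dirD fe p (x + t *\<^sub>R ?eN) = dirD \<phi> p x + t" for x t
    using linear_add[OF bounded_linear.linear[OF blfe]] linear_scale[OF bounded_linear.linear[OF blfe]]
    by (simp add: dfe de1)
  have dt0ps: "dt0 ps q0 = - dt \<phi> p"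
  proof -
    have "Gl (0, 1) = et + Lam (0, 1) *\<^sub>R ?eN" by (simp add: Gl_def E01)
    then show ?thesis by (simp add: dt0_def dt_def dps dfelin)
  qed
  define a where "a = (\<lambda>w. Lam (Pr w) - ImN w)"
  have GlPr: "Gl (Pr w) = w + a w *\<^sub>R ?eN" for w
  proof -
    have "E (Pr w) = w - ImN w *\<^sub>R ?eN" using decomp[of w] by (simp add: algebra_simps)
    then show ?thesis by (simp add: Gl_def a_def algebra_simps scaleR_left_diff_distrib)
  qed
  have G1: "dirD (lift ps) p0 = (\<lambda>w. - dirD \<phi> p w)"
  proof
    fix w show "dirD (lift ps) p0 w = - dirD \<phi> p w"
      by (simp add: l1 dps GlPr dfelin a_def)
  qed
  have B1: "dirD2 (lift ps) p0 v w = - Be (v + a v *\<^sub>R ?eN) (w + a w *\<^sub>R ?eN)" for v w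
    by (simp add: l2 d2ps GlPr)
  have lin1: "Be (x + t *\<^sub>R y) w = Be x w + t * Be y w" for x y t w
    using dirD2_comb[OF Cfe, of 1 x t y w] by (simp add: Be_def)
  have lin2: "Be w (x + t *\<^sub>R y) = Be w x + t * Be w y" for x y t w
    using linear_add[OF bounded_linear.linear[OF bBw]] linear_scale[OF bounded_linear.linear[OF bBw]] by simp
  have gam_lin: "gam (x + t *\<^sub>R y) = gam x + t * gam y" for x y t
    using linear_add[OF bounded_linear.linear[OF bgam]] linear_scale[OF bounded_linear.linear[OF bgam]] by simp
  have gam_e: "gam ?eN = ce" by (simp add: gam_def ce_def)
  have aeq: "a w = - gam w / ce" for w
  proof -
    have "gam w = gam (E (Pr w)) + ImN w * ce" using gam_lin[of "E (Pr w)" "ImN w" ?eN] decomp[of w] gam_e by simp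
    then show ?thesis using ce0 by (simp add: a_def Lam_def field_simps)
  qed
  have gdef: "gam w = (Be w ?eN + Be ?eN w) / 2" for w by (simp add: gam_def)
  have LC: "levi_gen (dirD (lift ps) p0) (dirD2 (lift ps) p0) =
      levi_gen (dirD (lift ps) p0) (\<lambda>v w. - Be v w) + (1/ce) * levi_gen (dirD (lift ps) p0) (\<lambda>v w. gam v * gam w)"
    by (rule levi_compare[OF B1 lin1 lin2 gdef ce0 ce_def[symmetric] aeq])
  define K where "K = levi_gen (\<lambda>w. - dirD \<phi> p w) (\<lambda>v w. ImN v * ImN w)"
  define R where "R = levi_gen (\<lambda>w. - dirD \<phi> p w) (\<lambda>v w. gam v * gam w)"
  have R0: "0 \<le> R" unfolding R_def by (rule levi_gen_rank1)
  have Bm: "(\<lambda>v w. - Be v w) = (\<lambda>v w. (-1) * dirD2 \<phi> p v w + (- 2 * \<sigma> * \<epsilon>) * (ImN v * ImN w))"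
    by (intro HOL.ext) (simp add: Be_def d2fe algebra_simps)
  have LB: "levi_gen (\<lambda>w. - dirD \<phi> p w) (\<lambda>v w. - Be v w) = - levi \<phi> p - 2 * \<sigma> * \<epsilon> * K"
  proof -
    have "levi_gen (\<lambda>w. - dirD \<phi> p w) (\<lambda>v w. - Be v w) =
        levi_gen (\<lambda>w. - dirD \<phi> p w) (\<lambda>v w. (-1) * dirD2 \<phi> p v w) +
        levi_gen (\<lambda>w. - dirD \<phi> p w) (\<lambda>v w. (- 2 * \<sigma> * \<epsilon>) * (ImN v * ImN w))"
      unfolding Bm by (rule levi_gen_add)
    also have "\<dots> = (-1) * levi_gen (\<lambda>w. - dirD \<phi> p w) (dirD2 \<phi> p) + (- 2 * \<sigma> * \<epsilon>) * K"
      unfolding K_def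
      using levi_gen_scale[of "\<lambda>w. - dirD \<phi> p w" "-1" "dirD2 \<phi> p"]
        levi_gen_scale[of "\<lambda>w. - dirD \<phi> p w" "- 2 * \<sigma> * \<epsilon>" "\<lambda>v w. ImN v * ImN w"] by simp
    also have "levi_gen (\<lambda>w. - dirD \<phi> p w) (dirD2 \<phi> p) = levi \<phi> p"
      by (simp add: levi_gen_negG[of "dirD \<phi> p"] levi_eq)
    finally show ?thesis by simp
  qed
  have Lev0: "levi0 ps q0 = - levi \<phi> p - 2 * \<sigma> * \<epsilon> * K + (1/ce) * R"
    using L0 LC LB unfolding G1 R_def by simp
  have isG: "isCont (\<lambda>q. Gl q + cc) q0"
    by (rule continuous_add[OF linear_continuous_at[OF bGl] continuous_const])
  have GO: "Gl q + cc \<in> ?\<Omega>" if "q \<in> ?Dt" for q using that by (simp only: inO PrG)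
  obtain d where d: "d > 0" "\<forall>q\<in>?Dt. dist q q0 < d \<longrightarrow> \<sigma> * (v (Gl q + cc) - \<phi> (Gl q + cc)) \<le> \<sigma> * (v p - \<phi> p)"
    using loc_pull[OF ext' isG Gq0 GO] by blast
  have uq: "u q - ps q = - (v (Gl q + cc) - fe (Gl q + cc))" for q
    by (simp add: ps_def v_def PrG ImG)
  have fe_ge: "\<sigma> * (v x - fe x) \<le> \<sigma> * (v x - \<phi> x)" for x
  proof -
    have "\<sigma> * (v x - fe x) = \<sigma> * (v x - \<phi> x) - (\<sigma> * \<sigma>) * \<epsilon> * (ImN x + (- y0))\<^sup>2"
      by (simp add: fe_def algebra_simps)
    then show ?thesis using \<sigma>2 \<epsilon> by simp
  qed
  have fep: "fe p = \<phi> p" by (simp add: fe_def y0_def)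
  have loc: "\<forall>q\<in>?Dt. dist q q0 < d \<longrightarrow> \<sigma> * (u q0 - ps q0) \<le> \<sigma> * (u q - ps q)"
  proof (intro ballI impI)
    fix q assume q: "q \<in> ?Dt" "dist q q0 < d"
    have "\<sigma> * (u q - ps q) = - (\<sigma> * (v (Gl q + cc) - fe (Gl q + cc)))" by (simp add: uq algebra_simps)
    also have "\<dots> \<ge> - (\<sigma> * (v p - \<phi> p))" using fe_ge[of "Gl q + cc"] d(2) q by force
    finally have "- (\<sigma> * (v p - \<phi> p)) \<le> \<sigma> * (u q - ps q)" .
    moreover have eqq: "u q0 - ps q0 = - (v p - \<phi> p)" by (simp only: uq Gq0 fep)
    have "\<sigma> * (u q0 - ps q0) = - (\<sigma> * (v p - \<phi> p))" unfolding eqq by (rule mult_minus_right)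
    ultimately show "\<sigma> * (u q0 - ps q0) \<le> \<sigma> * (u q - ps q)" by simp
  qed
  have q0Dt: "q0 \<in> ?Dt" using pO unfolding q0_def by (simp only: inO)
  have H0q: "(loc_max ?Dt (\<lambda>r. u r - ps r) q0 \<longrightarrow> dt0 ps q0 \<le> levi0 ps q0) \<and>
             (loc_min ?Dt (\<lambda>r. u r - ps r) q0 \<longrightarrow> dt0 ps q0 \<ge> levi0 ps q0)"
    using H0 q0Dt U2o q0U2 smps unfolding weak_sol_H0_def by blast
  have main: "\<sigma> * levi0 ps q0 \<le> \<sigma> * dt0 ps q0"
    using \<sigma>
  proof
    assume s1: "\<sigma> = 1"
    have "loc_min ?Dt (\<lambda>r. u r - ps r) q0" unfolding loc_min_def using d(1) loc s1 by auto
    then show ?thesis using H0q s1 by simp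
  next
    assume s1: "\<sigma> = -1"
    have "loc_max ?Dt (\<lambda>r. u r - ps r) q0" unfolding loc_max_def
    proof (intro exI[of _ d] conjI ballI impI)
      fix q assume q: "q \<in> ?Dt" "dist q q0 < d"
      then have "\<sigma> * (u q0 - ps q0) \<le> \<sigma> * (u q - ps q)" using loc by blast
      then show "u q - ps q \<le> u q0 - ps q0" using s1 by simp
    qed (rule d(1))
    then show ?thesis using H0q s1 by simp
  qed
  have pos: "0 \<le> \<sigma> * ((1/ce) * R)"
  proof -
    have "\<sigma> * (1/ce) = 1 / (\<sigma> * ce)" using \<sigma> by auto
    then have "0 \<le> \<sigma> * (1/ce)" using sce by simp
    then have "0 \<le> (\<sigma> * (1/ce)) * R" using R0 by (rule mult_nonneg_nonneg)
    then show ?thesis by (simp only: mult.assoc)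
  qed
  have "\<sigma> * levi0 ps q0 = - \<sigma> * levi \<phi> p - 2 * (\<sigma> * \<sigma>) * \<epsilon> * K + \<sigma> * ((1/ce) * R)"
    by (simp add: Lev0 algebra_simps)
  then have "\<sigma> * levi0 ps q0 = - \<sigma> * levi \<phi> p - 2 * \<epsilon> * K + \<sigma> * ((1/ce) * R)" using \<sigma>2 by simp
  then show "\<sigma> * dt \<phi> p \<le> \<sigma> * levi \<phi> p + 2 * \<epsilon> * levi_gen (\<lambda>w. - dirD \<phi> p w) (\<lambda>v w. ImN v * ImN w)"
    using main pos dt0ps by (simp add: K_def)
qed



lemma eps_le:
  fixes x y K :: real
  assumes "\<And>\<epsilon>. \<epsilon> > 0 \<Longrightarrow> x \<le> y + 2 * \<epsilon> * K" shows "x \<le> y"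
proof (rule ccontr)
  assume "\<not> x \<le> y"
  then have xy: "x - y > 0" by simp
  show False
  proof (cases "K > 0")
    case True
    define e where "e = (x - y) / (4 * K)"
    have e: "e > 0" using xy True by (simp add: e_def)
    have "2 * e * K = (x - y) / 2" using True by (simp add: e_def field_simps)
    then show False using assms[OF e] xy by simp
  next
    case False
    then have "2 * 1 * K \<le> 0" by simp
    then show False using assms[of 1] xy by simp
  qed
qed

lemma converse:
  fixes D :: "((real^('m::finite option)) \<times> (real^'m)) set"
    and u :: "((real^('m option)) \<times> (real^'m)) \<times> real \<Rightarrow> real"
  assumes H0: "weak_sol_H0 (D \<times> {0<..}) u"
    and cu: "continuous_on (D \<times> {0<..}) u"
  shows "weak_sol_H {p. proj (fst p) \<in> D \<and> snd p > 0}
           (\<lambda>p. Im (fst p $ None) - u (proj (fst p), snd p))"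
proof -
  let ?\<Omega> = "{p. proj (fst p) \<in> D \<and> snd p > 0} :: ((complex^('m option)) \<times> real) set"
  let ?v = "\<lambda>p::(complex^('m option)) \<times> real. Im (fst p $ None) - u (proj (fst p), snd p)"
  have cont: "continuous_on ?\<Omega> ?v"
  proof -
    have c1: "continuous_on ?\<Omega> Pr"
      using linear_continuous_at[OF linear_Pr] by (intro continuous_at_imp_continuous_on) auto
    have c2: "continuous_on ?\<Omega> (\<lambda>x. u (Pr x))"
      by (rule continuous_on_compose2[OF cu c1]) (auto simp: Pr_def)
    have c3: "continuous_on ?\<Omega> ImN"
      using linear_continuous_at[OF linear_ImN] by (intro continuous_at_imp_continuous_on) auto
    have cc: "continuous_on ?\<Omega> (\<lambda>x. ImN x - u (Pr x))" by (rule continuous_on_diff[OF c3 c2])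
    show ?thesis
      by (rule continuous_on_cong[THEN iffD1, OF refl _ cc]) (simp add: ImN_def Pr_def)
  qed
  have key: "(loc_max ?\<Omega> (\<lambda>q. ?v q - \<phi> q) p \<longrightarrow>
           (if (\<forall>a. dz \<phi> p a = 0)
            then (\<exists>\<eta>::complex^('m option). norm \<eta> \<le> 1 \<and> dt \<phi> p \<le> levi_deg \<phi> p \<eta>)
            else dt \<phi> p \<le> levi \<phi> p)) \<and>
        (loc_min ?\<Omega> (\<lambda>q. ?v q - \<phi> q) p \<longrightarrow>
           (if (\<forall>a. dz \<phi> p a = 0)
            then (\<exists>\<eta>::complex^('m option). norm \<eta> \<le> 1 \<and> dt \<phi> p \<ge> levi_deg \<phi> p \<eta>)
            else dt \<phi> p \<ge> levi \<phi> p))"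
    if pO: "p \<in> ?\<Omega>" and U: "open U" "p \<in> U" and sm: "smooth_on U \<phi>" for p \<phi> U
  proof -
    have nd: "\<not> (\<forall>a. dz \<phi> p a = 0)" if "dirD \<phi> p (ey None) = 1"
    proof
      assume "\<forall>a. dz \<phi> p a = 0"
      then have "dz \<phi> p None = 0" by blast
      then show False using that by (simp add: dz_def complex_eq_iff)
    qed
    show ?thesis
    proof (intro conjI impI)
      assume "loc_max ?\<Omega> (\<lambda>q. ?v q - \<phi> q) p"
      then have ex: "\<exists>r>0. \<forall>x\<in>?\<Omega>. dist x p < r \<longrightarrow> 1 * (?v x - \<phi> x) \<le> 1 * (?v p - \<phi> p)"
        unfolding loc_max_def by simp
      have d1: "dirD \<phi> p (ey None) = 1"
        by (rule conv_core(1)[OF _ H0 pO U sm ex, of 1]) simp_all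
      have "1 * dt \<phi> p \<le> 1 * levi \<phi> p"
        by (rule eps_le, rule conv_core(2)[OF _ H0 pO U sm ex]) simp_all
      then show "if (\<forall>a. dz \<phi> p a = 0)
            then (\<exists>\<eta>::complex^('m option). norm \<eta> \<le> 1 \<and> dt \<phi> p \<le> levi_deg \<phi> p \<eta>)
            else dt \<phi> p \<le> levi \<phi> p"
        unfolding if_not_P[OF nd[OF d1]] using \<open>_ * dt \<phi> p \<le> _ * levi \<phi> p\<close> by simp
    next
      assume "loc_min ?\<Omega> (\<lambda>q. ?v q - \<phi> q) p"
      then obtain r where r: "r > 0" "\<forall>x\<in>?\<Omega>. dist x p < r \<longrightarrow> ?v p - \<phi> p \<le> ?v x - \<phi> x"
        unfolding loc_min_def by blast
      have ex: "\<exists>r>0. \<forall>x\<in>?\<Omega>. dist x p < r \<longrightarrow> (-1) * (?v x - \<phi> x) \<le> (-1) * (?v p - \<phi> p)"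
      proof (intro exI[of _ r] conjI ballI impI)
        fix x assume "x \<in> ?\<Omega>" "dist x p < r"
        then have "?v p - \<phi> p \<le> ?v x - \<phi> x" using r(2) by blast
        then show "(-1) * (?v x - \<phi> x) \<le> (-1) * (?v p - \<phi> p)" by simp
      qed (rule r(1))
      have d1: "dirD \<phi> p (ey None) = 1"
        by (rule conv_core(1)[OF _ H0 pO U sm ex, of 1]) simp_all
      have "(-1) * dt \<phi> p \<le> (-1) * levi \<phi> p"
        by (rule eps_le, rule conv_core(2)[OF _ H0 pO U sm ex]) simp_all
      then show "if (\<forall>a. dz \<phi> p a = 0)
            then (\<exists>\<eta>::complex^('m option). norm \<eta> \<le> 1 \<and> dt \<phi> p \<ge> levi_deg \<phi> p \<eta>)
            else dt \<phi> p \<ge> levi \<phi> p"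
        unfolding if_not_P[OF nd[OF d1]] using \<open>_ * dt \<phi> p \<le> _ * levi \<phi> p\<close> by simp
    qed
  qed
  show ?thesis unfolding weak_sol_H_def using cont key by blast
qed

theorem lemma3p2:
  fixes D :: "((real^('m::finite option)) \<times> (real^'m)) set"
    and u :: "((real^('m option)) \<times> (real^'m)) \<times> real \<Rightarrow> real"
  assumes "open D" and "connected D" and "D \<noteq> {}"
    and "continuous_on (D \<times> {0<..}) u"
  shows "weak_sol_H {p. proj (fst p) \<in> D \<and> snd p > 0}
           (\<lambda>p. Im (fst p $ None) - u (proj (fst p), snd p))
         \<longleftrightarrow> weak_sol_H0 (D \<times> {0<..}) u"
  using forward[OF _ assms(4)] converse[OF _ assms(4)] by blast

end
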